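(* Let $G$ be a finite simple undirected graph with maximum degree $\Delta$. Then $$\operatorname{adim}(G) \geq \frac{2(|V(G)|-1)}{\Delta+3}.$$
   Context: For a graph $G$, $d(u,v)$ is the shortest-path distance ($\infty$ if $u,v$ lie in different components), and $d_1(u,v)=\min(d(u,v),2)$. A set $A\subseteq V(G)$ is an adjacency resolving set if for all distinct $x,y\in V(G)$ there is $z\in A$ with $d_1(z,x)\neq d_1(z,y)$. The adjacency dimension $\operatorname{adim}(G)$ is the minimum cardinality of an adjacency resolving set. *)

theory Defs
  imports Main "HOL-Library.Extended_Nat"
begin

definition simple_graph :: "'a set \<Rightarrow> ('a \<Rightarrow> 'a \<Rightarrow> bool) \<Rightarrow> bool" where
  "simple_graph V E \<longleftrightarrow> finite V \<and> (\<forall>x y. E x y \<longrightarrow> x \<in> V \<and> y \<in> V)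
     \<and> (\<forall>x y. E x y \<longrightarrow> E y x) \<and> (\<forall>x. \<not> E x x)"

definition degree :: "'a set \<Rightarrow> ('a \<Rightarrow> 'a \<Rightarrow> bool) \<Rightarrow> 'a \<Rightarrow> nat" where
  "degree V E v = card {u \<in> V. E v u}"

definition max_degree :: "'a set \<Rightarrow> ('a \<Rightarrow> 'a \<Rightarrow> bool) \<Rightarrow> nat" where
  "max_degree V E = Max (insert 0 (degree V E ` V))"

text \<open>A walk of length n from u to v (list of the n+1 vertices).\<close>
definition is_walk :: "'a set \<Rightarrow> ('a \<Rightarrow> 'a \<Rightarrow> bool) \<Rightarrow> 'a list \<Rightarrow> bool" where
  "is_walk V E p \<longleftrightarrow> p \<noteq> [] \<and> set p \<subseteq> V \<and> (\<forall>i < length p - 1. E (p ! i) (p ! Suc i))"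

text \<open>Shortest-path distance, \<infinity> if no path.\<close>
definition dist :: "'a set \<Rightarrow> ('a \<Rightarrow> 'a \<Rightarrow> bool) \<Rightarrow> 'a \<Rightarrow> 'a \<Rightarrow> enat" where
  "dist V E u v = (INF p \<in> {p. is_walk V E p \<and> hd p = u \<and> last p = v}. enat (length p - 1))"

definition dist1 :: "'a set \<Rightarrow> ('a \<Rightarrow> 'a \<Rightarrow> bool) \<Rightarrow> 'a \<Rightarrow> 'a \<Rightarrow> enat" where
  "dist1 V E u v = min (dist V E u v) 2"

definition adj_resolving :: "'a set \<Rightarrow> ('a \<Rightarrow> 'a \<Rightarrow> bool) \<Rightarrow> 'a set \<Rightarrow> bool" where
  "adj_resolving V E A \<longleftrightarrow> A \<subseteq> V \<and>
     (\<forall>x\<in>V. \<forall>y\<in>V. x \<noteq> y \<longrightarrow> (\<exists>z\<in>A. dist1 V E z x \<noteq> dist1 V E z y))"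

definition adim :: "'a set \<Rightarrow> ('a \<Rightarrow> 'a \<Rightarrow> bool) \<Rightarrow> nat" where
  "adim V E = (LEAST k. \<exists>A. adj_resolving V E A \<and> card A = k)"

end

theory Submission
  imports Defs
begin

lemma cnt:
  assumes "finite A"
  shows "(\<Sum>z\<in>A. if P z then 1 else (0::nat)) = card {z\<in>A. P z}"
proof -
  have "card {z\<in>A. P z} = (\<Sum>z\<in>{z\<in>A. P z}. 1)" by simp
  also have "\<dots> = (\<Sum>z\<in>A. if P z then 1 else 0)" by (rule sum.inter_filter[OF assms])
  finally show ?thesis by simp
qed

lemma walk_len2:
  assumes "is_walk V E p" "hd p = z" "last p = x" "z \<noteq> x"
  shows "length p \<ge> 2"
proof (rule ccontr)
  assume "\<not> length p \<ge> 2"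
  moreover have "p \<noteq> []" using assms unfolding is_walk_def by auto
  moreover have "length p \<noteq> 0" using \<open>p \<noteq> []\<close> by simp
  ultimately have "length p = 1" by linarith
  then obtain a where "p = [a]" by (auto simp: length_Suc_conv)
  thus False using assms by auto
qed

lemma walk_len3:
  assumes "is_walk V E p" "hd p = z" "last p = x" "z \<noteq> x" "\<not> E z x"
  shows "length p \<ge> 3"
proof (rule ccontr)
  assume "\<not> length p \<ge> 3"
  moreover have "length p \<ge> 2" by (rule walk_len2[OF assms(1-4)])
  ultimately have "length p = 2" by auto
  then obtain a b where p: "p = [a,b]"
    by (auto simp: length_Suc_conv numeral_2_eq_2)
  have "E (p!0) (p!1)" using assms(1) p unfolding is_walk_def by auto
  thus False using assms p by auto
qed

lemma dist1_ne:
  assumes "z \<in> V" "x \<in> V" "z \<noteq> x"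
  shows "dist1 V E z x = (if E z x then 1 else 2)"
proof -
  let ?S = "{p. is_walk V E p \<and> hd p = z \<and> last p = x}"
  have ge1: "dist V E z x \<ge> 1" unfolding dist_def
  proof (rule INF_greatest)
    fix p assume "p \<in> ?S"
    hence "is_walk V E p" "hd p = z" "last p = x" by auto
    hence "length p \<ge> 2" using walk_len2[of V E p z x] assms(3) by blast
    thus "1 \<le> enat (length p - 1)" by (simp add: one_enat_def)
  qed
  show ?thesis
  proof (cases "E z x")
    case True
    have "[z,x] \<in> ?S" using True assms unfolding is_walk_def by auto
    hence "dist V E z x \<le> enat (length [z,x] - 1)" unfolding dist_def by (rule INF_lower)
    hence "dist V E z x \<le> 1" by (simp add: one_enat_def)
    hence "dist V E z x = 1" using ge1 by simp
    thus ?thesis using True unfolding dist1_def by simp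
  next
    case False
    have "dist V E z x \<ge> 2" unfolding dist_def
    proof (rule INF_greatest)
      fix p assume "p \<in> ?S"
      hence "is_walk V E p" "hd p = z" "last p = x" by auto
      hence "length p \<ge> 3" using walk_len3[of V E p z x] assms(3) False by blast
      thus "2 \<le> enat (length p - 1)" by (simp add: numeral_eq_enat)
    qed
    thus ?thesis using False unfolding dist1_def by (simp add: min_def)
  qed
qed

lemma dist1_self:
  assumes "z \<in> V"
  shows "dist1 V E z z = 0"
proof -
  have "[z] \<in> {p. is_walk V E p \<and> hd p = z \<and> last p = z}" using assms unfolding is_walk_def by auto
  hence "dist V E z z \<le> enat (length [z] - 1)" unfolding dist_def by (rule INF_lower)
  hence "dist V E z z = 0" by (simp add: zero_enat_def[symmetric])
  thus ?thesis unfolding dist1_def by simp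
qed

lemma V_resolving:
  assumes "simple_graph V E"
  shows "adj_resolving V E V"
  unfolding adj_resolving_def
proof (intro conjI ballI impI)
  fix x y assume "x \<in> V" "y \<in> V" "x \<noteq> y"
  have "dist1 V E x x \<noteq> dist1 V E x y"
    using dist1_self[OF \<open>x\<in>V\<close>] dist1_ne[OF \<open>x\<in>V\<close> \<open>y\<in>V\<close> \<open>x\<noteq>y\<close>, of E] by simp
  thus "\<exists>z\<in>V. dist1 V E z x \<noteq> dist1 V E z y" using \<open>x\<in>V\<close> by blast
qed simp

lemma main_bound:
  assumes G: "simple_graph V E" and R: "adj_resolving V E A"
  shows "2 * card V \<le> card A * (max_degree V E + 3) + 2"
proof -
  have fin: "finite V" using G unfolding simple_graph_def by auto
  have AV: "A \<subseteq> V" using R unfolding adj_resolving_def by auto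
  hence finA: "finite A" using fin finite_subset by auto
  define B where "B = V - A"
  have finB: "finite B" using fin B_def by auto
  define f where "f x = {z\<in>A. E z x}" for x
  define D where "D = max_degree V E"
  define k where "k = card A"
  have inj: "inj_on f B"
  proof (rule inj_onI)
    fix x y assume xB: "x \<in> B" and yB: "y \<in> B" and fe: "f x = f y"
    show "x = y"
    proof (rule ccontr)
      assume "x \<noteq> y"
      then obtain z where z: "z \<in> A" "dist1 V E z x \<noteq> dist1 V E z y"
        using R xB yB unfolding adj_resolving_def B_def by blast
      have "z \<noteq> x" "z \<noteq> y" using z xB yB B_def by auto
      have zV: "z \<in> V" using AV z(1) by blast
      have xV: "x \<in> V" "y \<in> V" using xB yB B_def by auto
      have "dist1 V E z x = (if E z x then 1 else 2)"
        by (rule dist1_ne[OF zV xV(1) \<open>z \<noteq> x\<close>])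
      moreover have "dist1 V E z y = (if E z y then 1 else 2)"
        by (rule dist1_ne[OF zV xV(2) \<open>z \<noteq> y\<close>])
      moreover have "E z x = E z y" using fe z(1) unfolding f_def by blast
      ultimately show False using z(2) by (cases "E z x") auto
    qed
  qed
  have finf: "finite (f x)" for x using finA unfolding f_def by auto
  have dc: "(\<Sum>x\<in>B. card (f x)) = (\<Sum>z\<in>A. card {x\<in>B. E z x})"
  proof -
    have "(\<Sum>x\<in>B. card (f x)) = (\<Sum>x\<in>B. \<Sum>z\<in>A. if E z x then 1 else 0)"
      unfolding f_def using finA by (simp add: cnt)
    also have "\<dots> = (\<Sum>z\<in>A. \<Sum>x\<in>B. if E z x then 1 else 0)" by (rule sum.swap)
    also have "\<dots> = (\<Sum>z\<in>A. card {x\<in>B. E z x})" using finB by (simp add: cnt)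
    finally show ?thesis .
  qed
  have degb: "card {x\<in>B. E z x} \<le> D" if "z \<in> A" for z
  proof -
    have "card {x\<in>B. E z x} \<le> card {u\<in>V. E z u}"
      by (rule card_mono) (use fin B_def in auto)
    also have "\<dots> = degree V E z" unfolding degree_def by simp
    also have "\<dots> \<le> D" unfolding D_def max_degree_def
      using fin that AV by (intro Max_ge) auto
    finally show ?thesis .
  qed
  have sumle: "(\<Sum>x\<in>B. card (f x)) \<le> k * D"
    unfolding dc k_def using sum_bounded_above[of A "\<lambda>z. card {x\<in>B. E z x}" D] degb by simp
  define B0 where "B0 = {x\<in>B. f x = {}}"
  define B1 where "B1 = {x\<in>B. card (f x) = 1}"
  have B0le: "card B0 \<le> 1"
  proof -
    have "inj_on f B0" using inj B0_def by (auto intro: inj_on_subset)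
    hence "card B0 = card (f ` B0)" by (simp add: card_image)
    also have "f ` B0 \<subseteq> {{}}" using B0_def by auto
    hence "card (f ` B0) \<le> card {{}::'a set}" by (intro card_mono) auto
    finally show ?thesis by simp
  qed
  have B1le: "card B1 \<le> k"
  proof -
    have "inj_on f B1" using inj B1_def by (auto intro: inj_on_subset)
    hence "card B1 = card (f ` B1)" by (simp add: card_image)
    also have "f ` B1 \<subseteq> (\<lambda>z. {z}) ` A"
    proof
      fix s assume "s \<in> f ` B1"
      then obtain x where "x \<in> B1" "s = f x" by auto
      then obtain z where "f x = {z}" using B1_def card_1_singletonE by blast
      moreover have "f x \<subseteq> A" unfolding f_def by auto
      ultimately show "s \<in> (\<lambda>z. {z}) ` A" using \<open>s = f x\<close> by auto
    qed
    hence "card (f ` B1) \<le> card ((\<lambda>z. {z}) ` A)" using finA by (intro card_mono) auto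
    also have "\<dots> \<le> k" unfolding k_def using card_image_le finA by blast
    finally show ?thesis .
  qed
  have pw: "2 \<le> card (f x) + (if card (f x) = 1 then 1 else 0) + (if f x = {} then 2 else 0)" for x
  proof -
    have "card (f x) = 0 \<Longrightarrow> f x = {}" using finf[of x] by simp
    thus ?thesis by (cases "card (f x) = 0"; cases "card (f x) = 1") auto
  qed
  have s1: "(\<Sum>x\<in>B. if card (f x) = 1 then 1 else 0) = card B1"
    unfolding B1_def using finB by (rule cnt)
  have s2: "(\<Sum>x\<in>B. if f x = {} then 2 else (0::nat)) = 2 * card B0"
  proof -
    have "(\<Sum>x\<in>B. if f x = {} then 2 else (0::nat)) = (\<Sum>x\<in>B. 2 * (if f x = {} then 1 else 0))"
      by (rule sum.cong) auto
    also have "\<dots> = 2 * (\<Sum>x\<in>B. if f x = {} then 1 else 0)" by (rule sum_distrib_left[symmetric])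
    also have "\<dots> = 2 * card B0" unfolding B0_def using cnt[OF finB] by simp
    finally show ?thesis .
  qed
  have "(\<Sum>x\<in>B. (2::nat)) \<le> (\<Sum>x\<in>B. card (f x) + (if card (f x) = 1 then 1 else 0) + (if f x = {} then 2 else 0))"
    by (rule sum_mono) (rule pw)
  also have "\<dots> = (\<Sum>x\<in>B. card (f x)) + card B1 + 2 * card B0"
    by (simp only: sum.distrib s1 s2)
  finally have "(\<Sum>x\<in>B. (2::nat)) \<le> (\<Sum>x\<in>B. card (f x)) + card B1 + 2 * card B0" .
  moreover have "(\<Sum>x\<in>B. (2::nat)) = 2 * card B" by simp
  ultimately have "2 * card B \<le> k * D + k + 2" using sumle B0le B1le by linarith
  moreover have "card V = k + card B"
  proof -
    have "card B = card V - card A" unfolding B_def by (rule card_Diff_subset[OF finA AV])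
    moreover have "card A \<le> card V" by (rule card_mono[OF fin AV])
    ultimately show ?thesis unfolding k_def by simp
  qed
  moreover have "card A * (max_degree V E + 3) = k * D + 3 * k" unfolding k_def D_def
    by (simp add: algebra_simps)
  ultimately show ?thesis by linarith
qed

theorem theorem1p13:
  fixes V :: "'a set" and E :: "'a \<Rightarrow> 'a \<Rightarrow> bool"
  assumes "simple_graph V E"
  shows "real (adim V E) \<ge> 2 * (real (card V) - 1) / (real (max_degree V E) + 3)"
proof -
  have ex: "\<exists>A. adj_resolving V E A \<and> card A = card V" using V_resolving[OF assms] by blast
  have "\<exists>A. adj_resolving V E A \<and> card A = adim V E"
    unfolding adim_def by (rule LeastI_ex) (use ex in blast)
  then obtain A where A: "adj_resolving V E A" "card A = adim V E" by blast
  have "2 * card V \<le> adim V E * (max_degree V E + 3) + 2" using main_bound[OF assms A(1)] A(2) by simp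
  hence "real (2 * card V) \<le> real (adim V E * (max_degree V E + 3) + 2)"
    by (simp only: of_nat_le_iff)
  hence h: "2 * (real (card V) - 1) \<le> real (adim V E) * (real (max_degree V E) + 3)"
    by (simp add: algebra_simps)
  have pos: "real (max_degree V E) + 3 > 0" by simp
  show ?thesis using h by (simp only: pos_divide_le_eq[OF pos])
qed

end
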